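(* Let $\gamma$ be the rotation of $\mathbb{R}^2$ through the angle $\pi/2$ about the origin. Then the map sending an overmarked box to its parameters $(\zeta_t,\zeta_b)$ induces an identification of the space of convex marked boxes modulo the action of $\mathscr{G}$ with the $2$-dimensional orbifold $]-1,1[^2/\langle\gamma\rangle$.
   Context: Let $V$ be a 3-dimensional real vector space, $\mathbf{P}(V)$ its projective plane, $\mathbf{P}(V^* )$ the dual plane. For distinct points $a,b$, $ab$ is the line through them; for distinct lines $A,B$, $AB$ is their intersection point. An overmarked box is $\Theta=((p,q,r,s;t,b),(P,Q,R,S;T,B))$ with $p,\dots,b\in\mathbf{P}(V)$, $P,\dots,B\in\mathbf{P}(V^* )$, $P=ts$, $Q=tr$, $R=bq$, $S=bp$, $T=pq$, $B=rs$ and $TB\notin\{p,q,r,s,t,b\}$. A $\Theta$-basis is a basis of $V$, unique up to scaling, in which $p=[-1:1:0]$, $q=[1:1:0]$, $r=[1:0:1]$, $s=[-1:0:1]$; then $t=[\zeta_t:1:0]$, $b=[\zeta_b:0:1]$ with $\zeta_t,\zeta_b\ne\pm1$ (the parameters of $\Theta$). $\Theta$ is convex if $p,q$ separate $t$ and $TB$ on the line $T$ and $r,s$ separate $b$ and $TB$ on the line $B$; equivalently $\zeta_t,\zeta_b\in\,]-1,1[$. A marked box $[\Theta]$ is the orbit of $\Theta$ under the involution $j:((p,q,r,s;t,b),(P,Q,R,S;T,B))\mapsto((q,p,s,r;t,b),(Q,P,S,R;T,B))$; it is convex if $\Theta$ is. The flag variety is $\mathscr{F}=\{([v],[v^*]):v^*(v)=0\}\subset\mathbf{P}(V)\times\mathbf{P}(V^*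 )$. The group $\mathscr{G}$ consists of projective transformations $(x,X)\mapsto(T(x),T^*(X))$ ($T$ induced by $g\in\mathrm{GL}(V)$, $T^*$ its action on lines) and dualities $(x,X)\mapsto(D^*(X),D(x))$, where $D:\mathbf{P}(V)\to\mathbf{P}(V^* )$ is induced by a linear isomorphism $V\to V^*$ with matrix $M$ (in a basis and its dual) and $D^*$ is induced by ${}^tM^{-1}$. $\mathscr{G}$ acts on marked boxes: a projective transformation acts on points by $T$ and on lines by $T^*$; a duality maps $\Theta$ to $((P^*,Q^*,S^*,R^*;T^*,B^* ),(q^*,p^*,r^*,s^*;t^*,b^* ))$ with $X^*=D^*(X)$, $x^*=D(x)$. These commute with $j$. *)

theory Defs
  imports "HOL-Analysis.Analysis"
begin

text \<open>V = real^3. A point of P(V) is a 1-dimensional subspace of V; a point of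
P(V*) (a line) is a 1-dimensional subspace of V* which we identify with real^3
via the dot product, so a covector w acts as v \<mapsto> w \<bullet> v.\<close>

type_synonym vec = "real^3"

definition proj :: "vec \<Rightarrow> vec set" where
  "proj v = span {v}"

definition PP :: "vec set set" where
  "PP = {proj v | v. v \<noteq> 0}"

definition incid :: "vec set \<Rightarrow> vec set \<Rightarrow> bool" where
  "incid x X \<longleftrightarrow> (\<forall>v\<in>x. \<forall>w\<in>X. w \<bullet> v = 0)"

definition join :: "vec set \<Rightarrow> vec set \<Rightarrow> vec set" where
  "join a b = (THE X. X \<in> PP \<and> incid a X \<and> incid b X)"

definition meet :: "vec set \<Rightarrow> vec set \<Rightarrow> vec set" where
  "meet A B = (THE x. x \<in> PP \<and> incid x A \<and> incid x B)"

datatype obox = OBox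
  (bp: "vec set") (bq: "vec set") (br: "vec set") (bs: "vec set") (bt: "vec set") (bb: "vec set")
  (bP: "vec set") (bQ: "vec set") (bR: "vec set") (bS: "vec set") (bT: "vec set") (bB: "vec set")

definition is_obox :: "obox \<Rightarrow> bool" where
  "is_obox \<Theta> \<longleftrightarrow>
     (\<forall>x\<in>{bp \<Theta>, bq \<Theta>, br \<Theta>, bs \<Theta>, bt \<Theta>, bb \<Theta>}. x \<in> PP) \<and>
     (\<forall>X\<in>{bP \<Theta>, bQ \<Theta>, bR \<Theta>, bS \<Theta>, bT \<Theta>, bB \<Theta>}. X \<in> PP) \<and>
     bt \<Theta> \<noteq> bs \<Theta> \<and> bt \<Theta> \<noteq> br \<Theta> \<and> bb \<Theta> \<noteq> bq \<Theta> \<and> bb \<Theta> \<noteq> bp \<Theta> \<and>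
     bp \<Theta> \<noteq> bq \<Theta> \<and> br \<Theta> \<noteq> bs \<Theta> \<and>
     bP \<Theta> = join (bt \<Theta>) (bs \<Theta>) \<and> bQ \<Theta> = join (bt \<Theta>) (br \<Theta>) \<and>
     bR \<Theta> = join (bb \<Theta>) (bq \<Theta>) \<and> bS \<Theta> = join (bb \<Theta>) (bp \<Theta>) \<and>
     bT \<Theta> = join (bp \<Theta>) (bq \<Theta>) \<and> bB \<Theta> = join (br \<Theta>) (bs \<Theta>) \<and>
     bT \<Theta> \<noteq> bB \<Theta> \<and>
     meet (bT \<Theta>) (bB \<Theta>) \<notin> {bp \<Theta>, bq \<Theta>, br \<Theta>, bs \<Theta>, bt \<Theta>, bb \<Theta>}"

text \<open>a, b separate c and d on the line ab: writing c = [\<alpha> a + \<beta> b], d = [\<alpha>' a + \<beta>' b],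
the affine coordinates \<beta>/\<alpha> and \<beta>'/\<alpha>' (a at 0, b at infinity) have opposite signs.\<close>
definition separates :: "vec set \<Rightarrow> vec set \<Rightarrow> vec set \<Rightarrow> vec set \<Rightarrow> bool" where
  "separates a b c d \<longleftrightarrow> a \<noteq> b \<and>
     (\<exists>va vb vc vd (\<alpha>::real) \<beta> \<alpha>' \<beta>'. va \<noteq> 0 \<and> vb \<noteq> 0 \<and>
        a = proj va \<and> b = proj vb \<and> c = proj vc \<and> d = proj vd \<and>
        vc = \<alpha> *\<^sub>R va + \<beta> *\<^sub>R vb \<and> vd = \<alpha>' *\<^sub>R va + \<beta>' *\<^sub>R vb \<and>
        \<alpha> * \<beta> * \<alpha>' * \<beta>' < 0)"

definition convex_box :: "obox \<Rightarrow> bool" where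
  "convex_box \<Theta> \<longleftrightarrow> is_obox \<Theta> \<and>
     separates (bp \<Theta>) (bq \<Theta>) (bt \<Theta>) (meet (bT \<Theta>) (bB \<Theta>)) \<and>
     separates (br \<Theta>) (bs \<Theta>) (bb \<Theta>) (meet (bT \<Theta>) (bB \<Theta>))"

definition vec3 :: "real \<Rightarrow> real \<Rightarrow> real \<Rightarrow> vec" where
  "vec3 x y z = (\<chi> i. if i = 1 then x else if i = 2 then y else z)"

text \<open>A \<Theta>-basis: the columns of the invertible matrix M; [x:y:z] = proj (M *v vec3 x y z).\<close>
definition theta_basis :: "obox \<Rightarrow> real^3^3 \<Rightarrow> bool" where
  "theta_basis \<Theta> M \<longleftrightarrow> invertible M \<and>
     bp \<Theta> = proj (M *v vec3 (-1) 1 0) \<and> bq \<Theta> = proj (M *v vec3 1 1 0) \<and>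
     br \<Theta> = proj (M *v vec3 1 0 1) \<and> bs \<Theta> = proj (M *v vec3 (-1) 0 1)"

definition params :: "obox \<Rightarrow> real \<times> real" where
  "params \<Theta> = (THE z. \<exists>M. theta_basis \<Theta> M \<and>
       bt \<Theta> = proj (M *v vec3 (fst z) 1 0) \<and> bb \<Theta> = proj (M *v vec3 (snd z) 0 1))"

definition jflip :: "obox \<Rightarrow> obox" where
  "jflip \<Theta> = OBox (bq \<Theta>) (bp \<Theta>) (bs \<Theta>) (br \<Theta>) (bt \<Theta>) (bb \<Theta>)
                   (bQ \<Theta>) (bP \<Theta>) (bS \<Theta>) (bR \<Theta>) (bT \<Theta>) (bB \<Theta>)"

definition proj_act :: "real^3^3 \<Rightarrow> obox \<Rightarrow> obox" where
  "proj_act A \<Theta> =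
     (let T = (\<lambda>x. (\<lambda>v. A *v v) ` x); Ts = (\<lambda>X. (\<lambda>w. matrix_inv (transpose A) *v w) ` X) in
      OBox (T (bp \<Theta>)) (T (bq \<Theta>)) (T (br \<Theta>)) (T (bs \<Theta>)) (T (bt \<Theta>)) (T (bb \<Theta>))
           (Ts (bP \<Theta>)) (Ts (bQ \<Theta>)) (Ts (bR \<Theta>)) (Ts (bS \<Theta>)) (Ts (bT \<Theta>)) (Ts (bB \<Theta>)))"

definition dual_act :: "real^3^3 \<Rightarrow> obox \<Rightarrow> obox" where
  "dual_act M \<Theta> =
     (let D = (\<lambda>x. (\<lambda>v. M *v v) ` x); Ds = (\<lambda>X. (\<lambda>w. matrix_inv (transpose M) *v w) ` X) in
      OBox (Ds (bP \<Theta>)) (Ds (bQ \<Theta>)) (Ds (bS \<Theta>)) (Ds (bR \<Theta>)) (Ds (bT \<Theta>)) (Ds (bB \<Theta>))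
           (D (bq \<Theta>)) (D (bp \<Theta>)) (D (br \<Theta>)) (D (bs \<Theta>)) (D (bt \<Theta>)) (D (bb \<Theta>)))"

definition G_equiv :: "obox \<Rightarrow> obox \<Rightarrow> bool" where
  "G_equiv \<Theta> \<Theta>' \<longleftrightarrow> (\<exists>A. invertible A \<and> (\<Theta>' = proj_act A \<Theta> \<or> \<Theta>' = dual_act A \<Theta>))"

definition marked_equiv :: "obox \<Rightarrow> obox \<Rightarrow> bool" where
  "marked_equiv \<Theta> \<Theta>' \<longleftrightarrow> G_equiv \<Theta> \<Theta>' \<or> G_equiv \<Theta> (jflip \<Theta>')"

definition rot :: "real \<times> real \<Rightarrow> real \<times> real" where
  "rot z = (- snd z, fst z)"

end

theory Submission
  imports Defs
begin

lemma vec3_nth[simp]: "vec3 x y z $ 1 = x" "vec3 x y z $ 2 = y" "vec3 x y z $ 3 = z"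
  by (simp_all add: vec3_def)

lemma vec3_eq_iff: "(v::vec) = w \<longleftrightarrow> v$1 = w$1 \<and> v$2 = w$2 \<and> v$3 = w$3"
  by (simp add: vec_eq_iff forall_3)

lemma vec3_ops[simp]:
  "vec3 a b c + vec3 d e f = vec3 (a+d) (b+e) (c+f)"
  "vec3 a b c - vec3 d e f = vec3 (a-d) (b-e) (c-f)"
  "k *\<^sub>R vec3 a b c = vec3 (k*a) (k*b) (k*c)"
  "vec3 0 0 0 = 0"
  by (simp_all add: vec_eq_iff forall_3)

lemma vec3_ex: "(v::vec) = vec3 (v$1) (v$2) (v$3)"
  by (simp add: vec3_eq_iff)

lemma inner3: "(v::vec) \<bullet> w = v$1 * w$1 + v$2 * w$2 + v$3 * w$3"
  by (simp add: inner_vec_def sum_3)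

lemma zero3: "(v::vec) = 0 \<longleftrightarrow> v$1 = 0 \<and> v$2 = 0 \<and> v$3 = 0"
  by (simp add: vec3_eq_iff)

definition cr :: "vec \<Rightarrow> vec \<Rightarrow> vec" where
  "cr a b = vec3 (a$2 * b$3 - a$3 * b$2) (a$3 * b$1 - a$1 * b$3) (a$1 * b$2 - a$2 * b$1)"

lemma in_proj: "w \<in> proj v \<longleftrightarrow> (\<exists>c. w = c *\<^sub>R v)"
  by (auto simp: proj_def span_singleton)

lemma proj_mem: "v \<in> proj v"
  by (simp add: proj_def span_base)

lemma proj_eqD: "proj u = proj v \<Longrightarrow> \<exists>c. v = c *\<^sub>R u"
  using proj_mem[of v] in_proj by auto

lemma proj_scale: assumes "c \<noteq> 0" shows "proj (c *\<^sub>R v) = proj v"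
proof
  show "proj (c *\<^sub>R v) \<subseteq> proj v" by (auto simp: in_proj)
  show "proj v \<subseteq> proj (c *\<^sub>R v)"
  proof
    fix x assume "x \<in> proj v"
    then obtain k where "x = k *\<^sub>R v" by (auto simp: in_proj)
    then have "x = (k / c) *\<^sub>R (c *\<^sub>R v)" using assms by simp
    then show "x \<in> proj (c *\<^sub>R v)" unfolding in_proj by blast
  qed
qed

lemma proj_eq_iff: "proj u = proj v \<longleftrightarrow> (\<exists>c. c \<noteq> 0 \<and> v = c *\<^sub>R u) \<or> (u = 0 \<and> v = 0)"
proof
  assume h: "proj u = proj v"
  then obtain c where c: "v = c *\<^sub>R u" using proj_eqD by blast
  obtain d where d: "u = d *\<^sub>R v" using proj_eqD h by metis
  show "(\<exists>c. c \<noteq> 0 \<and> v = c *\<^sub>R u) \<or> (u = 0 \<and> v = 0)"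
  proof (cases "c = 0")
    case True then show ?thesis using c d by auto
  qed (use c in auto)
next
  assume "(\<exists>c. c \<noteq> 0 \<and> v = c *\<^sub>R u) \<or> (u = 0 \<and> v = 0)"
  then show "proj u = proj v" using proj_scale by auto
qed

lemma PP_E: "x \<in> PP \<Longrightarrow> (\<And>v. v \<noteq> 0 \<Longrightarrow> x = proj v \<Longrightarrow> thesis) \<Longrightarrow> thesis"
  unfolding PP_def by auto

lemma PP_I: "v \<noteq> 0 \<Longrightarrow> proj v \<in> PP"
  unfolding PP_def by auto

lemma incid_proj: "incid (proj v) (proj w) \<longleftrightarrow> w \<bullet> v = 0"
proof
  assume "incid (proj v) (proj w)" then show "w \<bullet> v = 0"
    unfolding incid_def using proj_mem by blast
next
  assume h: "w \<bullet> v = 0"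
  show "incid (proj v) (proj w)" unfolding incid_def using h by (auto simp: in_proj)
qed

lemma aux_div: "(n::real) \<noteq> 0 \<Longrightarrow> a * n = b * m \<Longrightarrow> a = b / n * m"
  by (simp add: field_simps)

lemma cross_par:
  assumes n: "(n::vec) \<noteq> 0" and c: "cr w n = 0"
  shows "\<exists>k. w = k *\<^sub>R n"
proof -
  have e: "w$2 * n$3 = w$3 * n$2" "w$3 * n$1 = w$1 * n$3" "w$1 * n$2 = w$2 * n$1"
    using c by (auto simp: cr_def zero3)
  consider "n$1 \<noteq> 0" | "n$2 \<noteq> 0" | "n$3 \<noteq> 0" using n zero3 by blast
  then show ?thesis
  proof cases
    case 1
    define k where "k = w$1 / n$1"
    have "w$1 = k * n$1" "w$2 = k * n$2" "w$3 = k * n$3"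
      unfolding k_def by (rule aux_div[OF 1]; simp add: e)+
    then have "w = k *\<^sub>R n" unfolding vec3_eq_iff by simp
    then show ?thesis by blast
  next
    case 2
    define k where "k = w$2 / n$2"
    have "w$1 = k * n$1" "w$2 = k * n$2" "w$3 = k * n$3"
      unfolding k_def by (rule aux_div[OF 2]; simp add: e)+
    then have "w = k *\<^sub>R n" unfolding vec3_eq_iff by simp
    then show ?thesis by blast
  next
    case 3
    define k where "k = w$3 / n$3"
    have "w$1 = k * n$1" "w$2 = k * n$2" "w$3 = k * n$3"
      unfolding k_def by (rule aux_div[OF 3]; simp add: e)+
    then have "w = k *\<^sub>R n" unfolding vec3_eq_iff by simp
    then show ?thesis by blast
  qed
qed

lemma orth_unique:
  assumes u: "u \<noteq> 0" and v: "v \<noteq> 0" and uv: "proj u \<noteq> proj v" and w: "w \<noteq> 0"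
    and wu: "w \<bullet> u = 0" and wv: "w \<bullet> v = 0"
  shows "proj w = proj (cr u v)"
proof -
  have nz: "cr u v \<noteq> 0"
  proof
    assume "cr u v = 0"
    then have "cr v u = 0" by (auto simp: cr_def zero3 algebra_simps)
    then obtain k where "v = k *\<^sub>R u" using cross_par u by blast
    then show False using uv v proj_scale[of k u] by (cases "k = 0") auto
  qed
  have "cr w (cr u v) = (w \<bullet> v) *\<^sub>R u - (w \<bullet> u) *\<^sub>R v"
    by (simp add: cr_def vec3_eq_iff inner3 algebra_simps)
  then have "cr w (cr u v) = 0" using wu wv by simp
  then obtain k where k: "w = k *\<^sub>R cr u v" using cross_par nz by blast
  then have "k \<noteq> 0" using w by auto
  then show ?thesis using k proj_scale by simp
qed
lemma join_eq:
  assumes a: "a \<in> PP" and b: "b \<in> PP" and ab: "a \<noteq> b" and X: "X \<in> PP"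
    and ia: "incid a X" and ib: "incid b X"
  shows "join a b = X"
proof -
  obtain u where u: "u \<noteq> 0" "a = proj u" using a by (rule PP_E)
  obtain v where v: "v \<noteq> 0" "b = proj v" using b by (rule PP_E)
  have key: "Y = proj (cr u v)" if Y: "Y \<in> PP" "incid a Y" "incid b Y" for Y
  proof -
    obtain y where y: "y \<noteq> 0" "Y = proj y" using Y(1) by (rule PP_E)
    show ?thesis using orth_unique[of u v y] u v y ab Y incid_proj by auto
  qed
  show ?thesis unfolding join_def
  proof (rule the_equality)
    show "X \<in> PP \<and> incid a X \<and> incid b X" using X ia ib by blast
    fix Y assume "Y \<in> PP \<and> incid a Y \<and> incid b Y"
    then show "Y = X" using key[of Y] key[of X] X ia ib by auto
  qed
qed

lemma meet_eq:
  assumes a: "A \<in> PP" and b: "B \<in> PP" and ab: "A \<noteq> B" and X: "x \<in> PP"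
    and ia: "incid x A" and ib: "incid x B"
  shows "meet A B = x"
proof -
  obtain u where u: "u \<noteq> 0" "A = proj u" using a by (rule PP_E)
  obtain v where v: "v \<noteq> 0" "B = proj v" using b by (rule PP_E)
  have key: "Y = proj (cr u v)" if Y: "Y \<in> PP" "incid Y A" "incid Y B" for Y
  proof -
    obtain y where y: "y \<noteq> 0" "Y = proj y" using Y(1) by (rule PP_E)
    show ?thesis using orth_unique[of u v y] u v y ab Y incid_proj inner_commute by metis
  qed
  show ?thesis unfolding meet_def
  proof (rule the_equality)
    show "x \<in> PP \<and> incid x A \<and> incid x B" using X ia ib by blast
    fix Y assume "Y \<in> PP \<and> incid Y A \<and> incid Y B"
    then show "Y = x" using key[of Y] key[of x] X ia ib by auto
  qed
qed

abbreviation dinv :: "real^3^3 \<Rightarrow> real^3^3" where "dinv A \<equiv> matrix_inv (transpose A)"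

lemma minv_props:
  assumes "invertible (A::real^3^3)"
  shows "A ** matrix_inv A = mat 1" "matrix_inv A ** A = mat 1"
proof -
  have "\<exists>A'. A ** A' = mat 1 \<and> A' ** A = mat 1" using assms unfolding invertible_def by blast
  then have "A ** matrix_inv A = mat 1 \<and> matrix_inv A ** A = mat 1"
    unfolding matrix_inv_def by (rule someI_ex)
  then show "A ** matrix_inv A = mat 1" "matrix_inv A ** A = mat 1" by auto
qed

lemma inv_minv: "invertible (A::real^3^3) \<Longrightarrow> invertible (matrix_inv A)"
  using minv_props unfolding invertible_def by blast

lemma minv_minv: assumes "invertible (A::real^3^3)" shows "matrix_inv (matrix_inv A) = A"
proof -
  have "matrix_inv (matrix_inv A) = (A ** matrix_inv A) ** matrix_inv (matrix_inv A)"
    using minv_props(1)[OF assms] by simp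
  also have "\<dots> = A ** (matrix_inv A ** matrix_inv (matrix_inv A))" by (simp add: matrix_mul_assoc)
  also have "\<dots> = A" using minv_props(1)[OF inv_minv[OF assms]] by simp
  finally show ?thesis .
qed

lemma inv_dinv: "invertible (A::real^3^3) \<Longrightarrow> invertible (dinv A)"
  using inv_minv transpose_invertible by blast

lemma mv_minv: "invertible (A::real^3^3) \<Longrightarrow> matrix_inv A *v (A *v v) = v"
  by (simp add: matrix_vector_mul_assoc minv_props)

lemma mv_minv2: "invertible (A::real^3^3) \<Longrightarrow> A *v (matrix_inv A *v v) = v"
  by (simp add: matrix_vector_mul_assoc minv_props)

lemma tdinv_mul: "invertible (A::real^3^3) \<Longrightarrow> transpose (dinv A) ** A = mat 1"
proof -
  assume a: "invertible A"
  have "transpose A ** dinv A = mat 1" using minv_props(1)[OF transpose_invertible[OF a]] .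
  then have "transpose (transpose A ** dinv A) = mat 1" by simp
  then show ?thesis by (simp add: matrix_transpose_mul)
qed

lemma tdinv_mv: "invertible (A::real^3^3) \<Longrightarrow> transpose (dinv A) *v (A *v v) = v"
  by (simp only: matrix_vector_mul_assoc tdinv_mul matrix_vector_mul_lid)

lemma t_dinv_mv: "invertible (A::real^3^3) \<Longrightarrow> transpose A *v (dinv A *v v) = v"
  using mv_minv2[OF transpose_invertible] by blast

lemma dinv_t_mv: "invertible (A::real^3^3) \<Longrightarrow> dinv A *v (transpose A *v v) = v"
  using mv_minv[OF transpose_invertible] by blast

lemma dinv_inner: "invertible (M::real^3^3) \<Longrightarrow> (dinv M *v w) \<bullet> (M *v u) = w \<bullet> u"
proof -
  assume a: "invertible M"
  have "(dinv M *v w) \<bullet> (M *v u) = (w v* transpose (dinv M)) \<bullet> (M *v u)"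
    by (simp only: vector_transpose_matrix)
  also have "\<dots> = w \<bullet> (transpose (dinv M) *v (M *v u))" by (rule dot_lmul_matrix)
  also have "\<dots> = w \<bullet> u" using tdinv_mv[OF a] by simp
  finally show ?thesis .
qed

lemma mv_zero: "invertible (M::real^3^3) \<Longrightarrow> M *v u = 0 \<longleftrightarrow> u = 0"
  by (metis mv_minv matrix_vector_mult_0_right)

lemma proj_M_eqD:
  assumes "invertible (M::real^3^3)" "proj (M *v u) = proj (M *v v)"
  shows "\<exists>c. v = c *\<^sub>R u"
proof -
  obtain c where "M *v v = c *\<^sub>R (M *v u)" using proj_eqD[OF assms(2)] by blast
  then have "M *v v = M *v (c *\<^sub>R u)" by (simp add: matrix_vector_mult_scaleR)
  then have "matrix_inv M *v (M *v v) = matrix_inv M *v (M *v (c *\<^sub>R u))" by simp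
  then show ?thesis using mv_minv[OF assms(1)] by metis
qed

lemma image_proj: "(\<lambda>v. (A::real^3^3) *v v) ` proj v = proj (A *v v)"
proof -
  have "linear (\<lambda>v. A *v v)" by simp
  then have "span ((\<lambda>v. A *v v) ` {v}) = (\<lambda>v. A *v v) ` span {v}" by (rule span_linear_image)
  then show ?thesis unfolding proj_def by simp
qed

lemma PP_M: "invertible (M::real^3^3) \<Longrightarrow> u \<noteq> 0 \<Longrightarrow> proj (M *v u) \<in> PP"
  using PP_I mv_zero by blast

lemma incid_M: "invertible (M::real^3^3) \<Longrightarrow> incid (proj (M *v u)) (proj (dinv M *v w)) \<longleftrightarrow> w \<bullet> u = 0"
  by (simp add: incid_proj dinv_inner)


definition boxM :: "real^3^3 \<Rightarrow> real \<Rightarrow> real \<Rightarrow> obox" where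
  "boxM M zt zb = OBox (proj (M *v vec3 (-1) 1 0)) (proj (M *v vec3 1 1 0))
     (proj (M *v vec3 1 0 1)) (proj (M *v vec3 (-1) 0 1)) (proj (M *v vec3 zt 1 0)) (proj (M *v vec3 zb 0 1))
     (proj (dinv M *v vec3 1 (-zt) 1)) (proj (dinv M *v vec3 1 (-zt) (-1)))
     (proj (dinv M *v vec3 (-1) 1 zb)) (proj (dinv M *v vec3 (-1) (-1) zb))
     (proj (dinv M *v vec3 0 0 1)) (proj (dinv M *v vec3 0 1 0))"

lemma neqM: "invertible (M::real^3^3) \<Longrightarrow> \<forall>c. v \<noteq> c *\<^sub>R u \<Longrightarrow> proj (M *v u) \<noteq> proj (M *v v)"
  using proj_M_eqD by blast

lemma joinM:
  assumes M: "invertible (M::real^3^3)" and "w \<bullet> u = 0" "w \<bullet> v = 0" "w \<noteq> 0" "u \<noteq> 0"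
    "\<forall>c. v \<noteq> c *\<^sub>R u"
  shows "join (proj (M *v u)) (proj (M *v v)) = proj (dinv M *v w)"
proof (rule join_eq)
  have "v \<noteq> 0" using assms(6) by (metis scale_zero_left)
  then show "proj (M *v u) \<in> PP" "proj (M *v v) \<in> PP" using PP_M[OF M] assms by auto
  show "proj (M *v u) \<noteq> proj (M *v v)" using neqM[OF M assms(6)] .
  show "proj (dinv M *v w) \<in> PP" using PP_M[OF inv_dinv[OF M]] assms by auto
  show "incid (proj (M *v u)) (proj (dinv M *v w))" "incid (proj (M *v v)) (proj (dinv M *v w))"
    using incid_M[OF M] assms by auto
qed

lemma meetM:
  assumes M: "invertible (M::real^3^3)" and "w1 \<bullet> u = 0" "w2 \<bullet> u = 0" "w1 \<noteq> 0" "u \<noteq> 0"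
    "\<forall>c. w2 \<noteq> c *\<^sub>R w1"
  shows "meet (proj (dinv M *v w1)) (proj (dinv M *v w2)) = proj (M *v u)"
proof (rule meet_eq)
  have "w2 \<noteq> 0" using assms(6) by (metis scale_zero_left)
  then show "proj (dinv M *v w1) \<in> PP" "proj (dinv M *v w2) \<in> PP" using PP_M[OF inv_dinv[OF M]] assms by auto
  show "proj (dinv M *v w1) \<noteq> proj (dinv M *v w2)" using neqM[OF inv_dinv[OF M] assms(6)] .
  show "proj (M *v u) \<in> PP" using PP_M[OF M] assms by auto
  show "incid (proj (M *v u)) (proj (dinv M *v w1))" "incid (proj (M *v u)) (proj (dinv M *v w2))"
    using incid_M[OF M] assms by auto
qed

lemma box_sel[simp]:
  "bp (boxM M zt zb) = proj (M *v vec3 (-1) 1 0)"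
  "bq (boxM M zt zb) = proj (M *v vec3 1 1 0)"
  "br (boxM M zt zb) = proj (M *v vec3 1 0 1)"
  "bs (boxM M zt zb) = proj (M *v vec3 (-1) 0 1)"
  "bt (boxM M zt zb) = proj (M *v vec3 zt 1 0)"
  "bb (boxM M zt zb) = proj (M *v vec3 zb 0 1)"
  "bP (boxM M zt zb) = proj (dinv M *v vec3 1 (-zt) 1)"
  "bQ (boxM M zt zb) = proj (dinv M *v vec3 1 (-zt) (-1))"
  "bR (boxM M zt zb) = proj (dinv M *v vec3 (-1) 1 zb)"
  "bS (boxM M zt zb) = proj (dinv M *v vec3 (-1) (-1) zb)"
  "bT (boxM M zt zb) = proj (dinv M *v vec3 0 0 1)"
  "bB (boxM M zt zb) = proj (dinv M *v vec3 0 1 0)"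
  by (simp_all add: boxM_def)

lemma meet_box:
  assumes M: "invertible (M::real^3^3)"
  shows "meet (proj (dinv M *v vec3 0 0 1)) (proj (dinv M *v vec3 0 1 0)) = proj (M *v vec3 1 0 0)"
  by (rule meetM[OF M]) (simp_all add: inner3 zero3 vec3_eq_iff)

lemma is_obox_box:
  assumes M: "invertible (M::real^3^3)" and zt: "zt \<noteq> 1" "zt \<noteq> -1" and zb: "zb \<noteq> 1" "zb \<noteq> -1"
  shows "is_obox (boxM M zt zb)"
proof -
  have "proj (M *v vec3 1 0 0) \<noteq> proj (M *v u)" if "u \<in> {vec3 (-1) 1 0, vec3 1 1 0, vec3 1 0 1, vec3 (-1) 0 1, vec3 zt 1 0, vec3 zb 0 1}" for u
      using that by (auto intro!: neqM[OF M] simp: vec3_eq_iff)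
    then have mt: "proj (M *v vec3 1 0 0) \<notin> {proj (M *v vec3 (-1) 1 0), proj (M *v vec3 1 1 0), proj (M *v vec3 1 0 1), proj (M *v vec3 (-1) 0 1), proj (M *v vec3 zt 1 0), proj (M *v vec3 zb 0 1)}" by blast
  show ?thesis
  unfolding is_obox_def box_sel meet_box[OF M]
proof (intro conjI ballI)
  fix x assume "x \<in> {proj (M *v vec3 (-1) 1 0), proj (M *v vec3 1 1 0), proj (M *v vec3 1 0 1), proj (M *v vec3 (-1) 0 1), proj (M *v vec3 zt 1 0), proj (M *v vec3 zb 0 1)}" then show "x \<in> PP" using PP_M[OF M] by (auto simp: zero3)
next
  fix x assume "x \<in> {proj (dinv M *v vec3 1 (-zt) 1), proj (dinv M *v vec3 1 (-zt) (-1)), proj (dinv M *v vec3 (-1) 1 zb), proj (dinv M *v vec3 (-1) (-1) zb), proj (dinv M *v vec3 0 0 1), proj (dinv M *v vec3 0 1 0)}" then show "x \<in> PP" using PP_M[OF inv_dinv[OF M]] by (auto simp: zero3)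
next
  show "proj (M *v vec3 zt 1 0) \<noteq> proj (M *v vec3 (-1) 0 1)" by (rule neqM[OF M]) (use zt zb in \<open>simp add: vec3_eq_iff\<close>)
next
  show "proj (M *v vec3 zt 1 0) \<noteq> proj (M *v vec3 1 0 1)" by (rule neqM[OF M]) (use zt zb in \<open>simp add: vec3_eq_iff\<close>)
next
  show "proj (M *v vec3 zb 0 1) \<noteq> proj (M *v vec3 1 1 0)" by (rule neqM[OF M]) (use zt zb in \<open>simp add: vec3_eq_iff\<close>)
next
  show "proj (M *v vec3 zb 0 1) \<noteq> proj (M *v vec3 (-1) 1 0)" by (rule neqM[OF M]) (use zt zb in \<open>simp add: vec3_eq_iff\<close>)
next
  show "proj (M *v vec3 (-1) 1 0) \<noteq> proj (M *v vec3 1 1 0)" by (rule neqM[OF M]) (use zt zb in \<open>simp add: vec3_eq_iff\<close>)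
next
  show "proj (M *v vec3 1 0 1) \<noteq> proj (M *v vec3 (-1) 0 1)" by (rule neqM[OF M]) (use zt zb in \<open>simp add: vec3_eq_iff\<close>)
next
  show "proj (dinv M *v vec3 1 (-zt) 1) = join (proj (M *v vec3 zt 1 0)) (proj (M *v vec3 (-1) 0 1))" by (rule joinM[OF M, symmetric]) (use zt zb in \<open>simp_all add: inner3 zero3 vec3_eq_iff\<close>)
next
  show "proj (dinv M *v vec3 1 (-zt) (-1)) = join (proj (M *v vec3 zt 1 0)) (proj (M *v vec3 1 0 1))" by (rule joinM[OF M, symmetric]) (use zt zb in \<open>simp_all add: inner3 zero3 vec3_eq_iff\<close>)
next
  show "proj (dinv M *v vec3 (-1) 1 zb) = join (proj (M *v vec3 zb 0 1)) (proj (M *v vec3 1 1 0))" by (rule joinM[OF M, symmetric]) (use zt zb in \<open>simp_all add: inner3 zero3 vec3_eq_iff\<close>)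
next
  show "proj (dinv M *v vec3 (-1) (-1) zb) = join (proj (M *v vec3 zb 0 1)) (proj (M *v vec3 (-1) 1 0))" by (rule joinM[OF M, symmetric]) (use zt zb in \<open>simp_all add: inner3 zero3 vec3_eq_iff\<close>)
next
  show "proj (dinv M *v vec3 0 0 1) = join (proj (M *v vec3 (-1) 1 0)) (proj (M *v vec3 1 1 0))" by (rule joinM[OF M, symmetric]) (use zt zb in \<open>simp_all add: inner3 zero3 vec3_eq_iff\<close>)
next
  show "proj (dinv M *v vec3 0 1 0) = join (proj (M *v vec3 1 0 1)) (proj (M *v vec3 (-1) 0 1))" by (rule joinM[OF M, symmetric]) (use zt zb in \<open>simp_all add: inner3 zero3 vec3_eq_iff\<close>)
next
  show "proj (dinv M *v vec3 0 0 1) \<noteq> proj (dinv M *v vec3 0 1 0)" by (rule neqM[OF inv_dinv[OF M]]) (simp add: vec3_eq_iff)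
qed (insert mt, assumption)
qed


lemma lin2: "(M::real^3^3) *v (a *\<^sub>R x + b *\<^sub>R y) = a *\<^sub>R (M *v x) + b *\<^sub>R (M *v y)"
  by (simp add: matrix_vector_right_distrib matrix_vector_mult_scaleR)

lemma sepM:
  assumes M: "invertible (M::real^3^3)" and u: "u \<noteq> 0" and v: "\<forall>c. v \<noteq> c *\<^sub>R u"
    and x: "x = a *\<^sub>R u + b *\<^sub>R v" and y: "y = a' *\<^sub>R u + b' *\<^sub>R v" and n: "a * b * a' * b' < 0"
  shows "separates (proj (M *v u)) (proj (M *v v)) (proj (M *v x)) (proj (M *v y))"
  unfolding separates_def
proof (intro conjI exI)
  show "proj (M *v u) \<noteq> proj (M *v v)" using neqM[OF M v] .
  show "M *v u \<noteq> 0" using u mv_zero[OF M] by auto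
  have "v \<noteq> 0" using v by (metis scale_zero_left)
  then show "M *v v \<noteq> 0" using mv_zero[OF M] by auto
  show "M *v x = a *\<^sub>R (M *v u) + b *\<^sub>R (M *v v)" using x lin2 by simp
  show "M *v y = a' *\<^sub>R (M *v u) + b' *\<^sub>R (M *v v)" using y lin2 by simp
  show "a * b * a' * b' < 0" by (rule n)
qed auto

lemma convex_box_M:
  assumes M: "invertible (M::real^3^3)" and zt: "-1 < zt" "zt < 1" and zb: "-1 < zb" "zb < 1"
  shows "convex_box (boxM M zt zb)"
  unfolding convex_box_def
proof (intro conjI)
  show "is_obox (boxM M zt zb)" using is_obox_box[OF M] zt zb by auto
  have n1: "(1 - zt) / 2 * ((1 + zt) / 2) * (- 1 / 2) * (1 / 2) < 0"
  proof -
    have "0 < (1 - zt) * (1 + zt)" using zt by (intro mult_pos_pos) auto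
    then show ?thesis by (simp add: field_simps)
  qed
  show "separates (bp (boxM M zt zb)) (bq (boxM M zt zb)) (bt (boxM M zt zb))
     (meet (bT (boxM M zt zb)) (bB (boxM M zt zb)))"
    unfolding box_sel meet_box[OF M]
    by (rule sepM[OF M _ _ _ _ n1]) (auto simp: vec3_eq_iff zero3 field_simps)
  have n2: "(1 + zb) / 2 * ((1 - zb) / 2) * (1 / 2) * (- 1 / 2) < 0"
  proof -
    have "0 < (1 - zb) * (1 + zb)" using zb by (intro mult_pos_pos) auto
    then show ?thesis by (simp add: field_simps)
  qed
  show "separates (br (boxM M zt zb)) (bs (boxM M zt zb)) (bb (boxM M zt zb))
     (meet (bT (boxM M zt zb)) (bB (boxM M zt zb)))"
    unfolding box_sel meet_box[OF M]
    by (rule sepM[OF M _ _ _ _ n2]) (auto simp: vec3_eq_iff zero3 field_simps)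
qed


lemma lin4: "(M::real^3^3) *v (a *\<^sub>R x + b *\<^sub>R y + c *\<^sub>R z + d *\<^sub>R w) =
    a *\<^sub>R (M *v x) + b *\<^sub>R (M *v y) + c *\<^sub>R (M *v z) + d *\<^sub>R (M *v w)"
  by (simp add: matrix_vector_right_distrib matrix_vector_mult_scaleR)

lemma params_box:
  assumes M: "invertible (M::real^3^3)"
  shows "params (boxM M zt zb) = (zt, zb)"
  unfolding params_def
proof (rule the_equality)
  show "\<exists>K. theta_basis (boxM M zt zb) K \<and> bt (boxM M zt zb) = proj (K *v vec3 (fst (zt, zb)) 1 0) \<and>
        bb (boxM M zt zb) = proj (K *v vec3 (snd (zt, zb)) 0 1)"
    using M by (intro exI[of _ M]) (simp add: theta_basis_def)
next
  fix z assume "\<exists>K. theta_basis (boxM M zt zb) K \<and> bt (boxM M zt zb) = proj (K *v vec3 (fst z) 1 0) \<and>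
        bb (boxM M zt zb) = proj (K *v vec3 (snd z) 0 1)"
  then obtain K where K: "invertible K" and
    hp: "proj (M *v vec3 (-1) 1 0) = proj (K *v vec3 (-1) 1 0)" and
    hq: "proj (M *v vec3 1 1 0) = proj (K *v vec3 1 1 0)" and
    hr: "proj (M *v vec3 1 0 1) = proj (K *v vec3 1 0 1)" and
    hs: "proj (M *v vec3 (-1) 0 1) = proj (K *v vec3 (-1) 0 1)" and
    ht: "proj (M *v vec3 zt 1 0) = proj (K *v vec3 (fst z) 1 0)" and
    hb: "proj (M *v vec3 zb 0 1) = proj (K *v vec3 (snd z) 0 1)"
    unfolding theta_basis_def by auto
  obtain a1 where a1: "K *v vec3 (-1) 1 0 = a1 *\<^sub>R (M *v vec3 (-1) 1 0)" using proj_eqD[OF hp] by blast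
  obtain a2 where a2: "K *v vec3 1 1 0 = a2 *\<^sub>R (M *v vec3 1 1 0)" using proj_eqD[OF hq] by blast
  obtain a3 where a3: "K *v vec3 1 0 1 = a3 *\<^sub>R (M *v vec3 1 0 1)" using proj_eqD[OF hr] by blast
  obtain a4 where a4: "K *v vec3 (-1) 0 1 = a4 *\<^sub>R (M *v vec3 (-1) 0 1)" using proj_eqD[OF hs] by blast
  have "K *v (1 *\<^sub>R vec3 (-1) 1 0 + (-1) *\<^sub>R vec3 1 1 0 + 1 *\<^sub>R vec3 1 0 1 + (-1) *\<^sub>R vec3 (-1) 0 1) = 0"
    by (simp del: scaleR_minus_left scale_one)
  then have "M *v (a1 *\<^sub>R vec3 (-1) 1 0 + (-a2) *\<^sub>R vec3 1 1 0 + a3 *\<^sub>R vec3 1 0 1 + (-a4) *\<^sub>R vec3 (-1) 0 1) = 0"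
    unfolding lin4 a1 a2 a3 a4 by simp
  then have "a1 *\<^sub>R vec3 (-1) 1 0 + (-a2) *\<^sub>R vec3 1 1 0 + a3 *\<^sub>R vec3 1 0 1 + (-a4) *\<^sub>R vec3 (-1) 0 1 = 0"
    using mv_zero[OF M] by blast
  then have e: "a2 = a1" "a3 = a1" "a4 = a1" by (auto simp: vec3_eq_iff)
  have a1nz: "a1 \<noteq> 0"
  proof
    assume "a1 = 0"
    then have "K *v vec3 (-1) 1 0 = 0" using a1 by simp
    then show False using mv_zero[OF K] by (simp add: vec3_eq_iff)
  qed
  obtain c where c: "K *v vec3 (fst z) 1 0 = c *\<^sub>R (M *v vec3 zt 1 0)" using proj_eqD[OF ht] by blast
  have "K *v vec3 (fst z) 1 0 = K *v (((1 - fst z)/2) *\<^sub>R vec3 (-1) 1 0 + ((1 + fst z)/2) *\<^sub>R vec3 1 1 0)"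
    by (simp add: vec3_eq_iff field_simps)
  also have "\<dots> = M *v (a1 *\<^sub>R vec3 (fst z) 1 0)"
    unfolding lin2 a1 a2 e by (simp add: lin2[symmetric] vec3_eq_iff field_simps matrix_vector_mult_scaleR)
  finally have eq1: "K *v vec3 (fst z) 1 0 = M *v (a1 *\<^sub>R vec3 (fst z) 1 0)" .
  have "M *v (a1 *\<^sub>R vec3 (fst z) 1 0) = M *v (c *\<^sub>R vec3 zt 1 0)"
    using eq1 c by (simp only: matrix_vector_mult_scaleR)
  then have "a1 *\<^sub>R vec3 (fst z) 1 0 = c *\<^sub>R vec3 zt 1 0" by (metis mv_minv[OF M])
  then have "a1 * fst z = c * zt" "a1 = c" by (auto simp: vec3_eq_iff)
  then have z1: "fst z = zt" using a1nz by simp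
  obtain d where d: "K *v vec3 (snd z) 0 1 = d *\<^sub>R (M *v vec3 zb 0 1)" using proj_eqD[OF hb] by blast
  have "K *v vec3 (snd z) 0 1 = K *v (((1 + snd z)/2) *\<^sub>R vec3 1 0 1 + ((1 - snd z)/2) *\<^sub>R vec3 (-1) 0 1)"
    by (simp add: vec3_eq_iff field_simps)
  also have "\<dots> = M *v (a1 *\<^sub>R vec3 (snd z) 0 1)"
    unfolding lin2 a3 a4 e by (simp add: lin2[symmetric] vec3_eq_iff field_simps matrix_vector_mult_scaleR)
  finally have eq1: "K *v vec3 (snd z) 0 1 = M *v (a1 *\<^sub>R vec3 (snd z) 0 1)" .
  have "M *v (a1 *\<^sub>R vec3 (snd z) 0 1) = M *v (d *\<^sub>R vec3 zb 0 1)"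
    using eq1 d by (simp only: matrix_vector_mult_scaleR)
  then have "a1 *\<^sub>R vec3 (snd z) 0 1 = d *\<^sub>R vec3 zb 0 1" by (metis mv_minv[OF M])
  then have "a1 * snd z = d * zb" "a1 = d" by (auto simp: vec3_eq_iff)
  then have z2: "snd z = zb" using a1nz by simp
  show "z = (zt, zb)" using z1 z2 by (simp add: prod_eq_iff)
qed


lemma linv2:
  assumes X: "invertible (X::real^3^3)" and h: "transpose X *v v = c *\<^sub>R w" and c: "c \<noteq> 0"
  shows "proj (dinv X *v w) = proj v"
proof -
  have "v = dinv X *v (transpose X *v v)" using dinv_t_mv[OF X] by simp
  also have "\<dots> = c *\<^sub>R (dinv X *v w)" by (simp only: h matrix_vector_mult_scaleR)
  finally show ?thesis using proj_scale[OF c] by simp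
qed

lemma proj_sc2: "c \<noteq> 0 \<Longrightarrow> u = c *\<^sub>R v \<Longrightarrow> proj ((A::real^3^3) *v ((B::real^3^3) *v u)) = proj (A *v (B *v v))"
  by (simp add: matrix_vector_mult_scaleR proj_scale)

lemma proj_sc1: "c \<noteq> 0 \<Longrightarrow> u = c *\<^sub>R v \<Longrightarrow> proj ((A::real^3^3) *v u) = proj (A *v v)"
  by (simp add: matrix_vector_mult_scaleR proj_scale)

lemma obox_eq: "bp a = bp b \<Longrightarrow> bq a = bq b \<Longrightarrow> br a = br b \<Longrightarrow> bs a = bs b \<Longrightarrow> bt a = bt b \<Longrightarrow> bb a = bb b \<Longrightarrow>
  bP a = bP b \<Longrightarrow> bQ a = bQ b \<Longrightarrow> bR a = bR b \<Longrightarrow> bS a = bS b \<Longrightarrow> bT a = bT b \<Longrightarrow> bB a = bB b \<Longrightarrow> a = b"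
  by (cases a; cases b) auto

lemma proj_act_sel[simp]:
  "bp (proj_act A X) = (\<lambda>v. A *v v) ` bp X" "bq (proj_act A X) = (\<lambda>v. A *v v) ` bq X"
  "br (proj_act A X) = (\<lambda>v. A *v v) ` br X" "bs (proj_act A X) = (\<lambda>v. A *v v) ` bs X"
  "bt (proj_act A X) = (\<lambda>v. A *v v) ` bt X" "bb (proj_act A X) = (\<lambda>v. A *v v) ` bb X"
  "bP (proj_act A X) = (\<lambda>v. dinv A *v v) ` bP X" "bQ (proj_act A X) = (\<lambda>v. dinv A *v v) ` bQ X"
  "bR (proj_act A X) = (\<lambda>v. dinv A *v v) ` bR X" "bS (proj_act A X) = (\<lambda>v. dinv A *v v) ` bS X"
  "bT (proj_act A X) = (\<lambda>v. dinv A *v v) ` bT X" "bB (proj_act A X) = (\<lambda>v. dinv A *v v) ` bB X"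
  by (simp_all add: proj_act_def Let_def)

lemma dual_act_sel[simp]:
  "bp (dual_act A X) = (\<lambda>v. dinv A *v v) ` bP X" "bq (dual_act A X) = (\<lambda>v. dinv A *v v) ` bQ X"
  "br (dual_act A X) = (\<lambda>v. dinv A *v v) ` bS X" "bs (dual_act A X) = (\<lambda>v. dinv A *v v) ` bR X"
  "bt (dual_act A X) = (\<lambda>v. dinv A *v v) ` bT X" "bb (dual_act A X) = (\<lambda>v. dinv A *v v) ` bB X"
  "bP (dual_act A X) = (\<lambda>v. A *v v) ` bq X" "bQ (dual_act A X) = (\<lambda>v. A *v v) ` bp X"
  "bR (dual_act A X) = (\<lambda>v. A *v v) ` br X" "bS (dual_act A X) = (\<lambda>v. A *v v) ` bs X"
  "bT (dual_act A X) = (\<lambda>v. A *v v) ` bt X" "bB (dual_act A X) = (\<lambda>v. A *v v) ` bb X"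
  by (simp_all add: dual_act_def Let_def)

lemma jflip_sel[simp]:
  "bp (jflip X) = bq X" "bq (jflip X) = bp X" "br (jflip X) = bs X" "bs (jflip X) = br X"
  "bt (jflip X) = bt X" "bb (jflip X) = bb X"
  "bP (jflip X) = bQ X" "bQ (jflip X) = bP X" "bR (jflip X) = bS X" "bS (jflip X) = bR X"
  "bT (jflip X) = bT X" "bB (jflip X) = bB X"
  by (simp_all add: jflip_def)

lemma jflip_jflip: "jflip (jflip X) = X"
  by (rule obox_eq) simp_all

lemma dinv_prod:
  assumes A: "invertible (A::real^3^3)" and M: "invertible (M::real^3^3)"
  shows "proj (dinv (A ** M) *v w) = proj (dinv A *v (dinv M *v w))"
proof (rule linv2[OF invertible_mult[OF A M], where c=1])
  have "transpose (A ** M) *v (dinv A *v (dinv M *v w)) = transpose M *v (transpose A *v (dinv A *v (dinv M *v w)))"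
    by (simp only: matrix_transpose_mul matrix_vector_mul_assoc matrix_mul_assoc)
  also have "\<dots> = w" by (simp only: t_dinv_mv[OF A] t_dinv_mv[OF M])
  finally show "transpose (A ** M) *v (dinv A *v (dinv M *v w)) = 1 *\<^sub>R w" by simp
qed simp

lemma proj_act_box:
  assumes A: "invertible (A::real^3^3)" and M: "invertible (M::real^3^3)"
  shows "proj_act A (boxM M zt zb) = boxM (A ** M) zt zb"
  by (rule obox_eq) (simp_all only: proj_act_sel box_sel image_proj matrix_vector_mul_assoc dinv_prod[OF A M])


definition Nm :: "real^3^3" where
  "Nm = (\<chi> i. if i = 1 then vec3 (-1) 0 0 else if i = 2 then vec3 0 1 0 else vec3 0 0 1)"

lemma Nm_mv: "Nm *v v = vec3 (- (v$1)) (v$2) (v$3)"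
  by (simp add: Nm_def matrix_vector_mult_def vec3_eq_iff sum_3)

lemma Nm_t: "transpose Nm = Nm"
  by (simp add: Nm_def transpose_def vec_eq_iff forall_3 vec3_def)

lemma Nm_sq: "Nm ** Nm = mat 1"
  by (simp add: Nm_def matrix_matrix_mult_def mat_def vec_eq_iff forall_3 sum_3 vec3_def)

lemma Nm_inv: "invertible Nm"
  unfolding invertible_def using Nm_sq by blast

lemma dinv_Nm: "dinv Nm = Nm"
proof -
  have "matrix_inv Nm = (Nm ** Nm) ** matrix_inv Nm" by (simp add: Nm_sq)
  also have "\<dots> = Nm ** (Nm ** matrix_inv Nm)" by (simp add: matrix_mul_assoc)
  also have "\<dots> = Nm" using minv_props(1)[OF Nm_inv] by simp
  finally show ?thesis by (simp add: Nm_t)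
qed

lemma jflip_box:
  assumes M: "invertible (M::real^3^3)"
  shows "jflip (boxM M zt zb) = boxM (M ** Nm) (-zt) (-zb)"
  apply (rule obox_eq)
  apply (simp_all only: jflip_sel box_sel dinv_prod[OF M Nm_inv] dinv_Nm matrix_vector_mul_assoc[symmetric])
  apply (simp_all add: Nm_mv)
  apply (rule proj_sc1[where c="-1"]; simp)+
  done

definition M0 :: "real \<Rightarrow> real \<Rightarrow> real^3^3" where
  "M0 zt zb = (\<chi> i. if i = 1 then vec3 (-1) (-zb) zt else if i = 2 then vec3 zt (zt*zb) (-1) else vec3 zb 1 (-(zt*zb)))"

lemma M0_mv: "M0 zt zb *v v = vec3 (- v$1 - zb * v$2 + zt * v$3) (zt * v$1 + zt*zb * v$2 - v$3) (zb * v$1 + v$2 - zt*zb * v$3)"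
  by (simp add: M0_def matrix_vector_mult_def vec3_eq_iff sum_3 algebra_simps)

lemma M0_tmv: "transpose (M0 zt zb) *v v = vec3 (- v$1 + zt * v$2 + zb * v$3) (-zb * v$1 + zt*zb * v$2 + v$3) (zt * v$1 - v$2 - zt*zb * v$3)"
  by (simp del: transpose_matrix_vector add: M0_def transpose_def matrix_vector_mult_def vec3_eq_iff sum_3 algebra_simps)

lemma M0_inv:
  assumes "zt^2 < 1" "zb^2 < 1"
  shows "invertible (M0 zt zb)"
proof -
  have "det (M0 zt zb) = - ((1 - zt^2) * (1 - zb^2))"
    by (simp add: det_3 M0_def algebra_simps power2_eq_square)
  moreover have "(1 - zt^2) * (1 - zb^2) > 0" using assms by (intro mult_pos_pos) auto
  ultimately show ?thesis using assms by (simp add: invertible_det_nz)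
qed


lemma XT:
  assumes C: "invertible (C::real^3^3)" and M: "invertible (M::real^3^3)"
  shows "transpose (dinv C ** dinv M ** K) *v (C *v (M *v u)) = transpose K *v u"
proof -
  have "transpose (dinv C ** dinv M ** K) = transpose K ** (transpose (dinv M) ** transpose (dinv C))"
    by (simp only: matrix_transpose_mul)
  then have "transpose (dinv C ** dinv M ** K) *v (C *v (M *v u)) =
     transpose K *v (transpose (dinv M) *v (transpose (dinv C) *v (C *v (M *v u))))"
    by (simp only: matrix_vector_mul_assoc matrix_mul_assoc)
  also have "\<dots> = transpose K *v u" by (simp only: tdinv_mv[OF C] tdinv_mv[OF M])
  finally show ?thesis .
qed

lemma dual_box:
  assumes C: "invertible (C::real^3^3)" and M: "invertible (M::real^3^3)"
    and zt: "-1 < zt" "zt < 1" and zb: "-1 < zb" "zb < 1"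
  shows "dual_act C (boxM M zt zb) = boxM (dinv C ** dinv M ** M0 zt zb) (-zb) zt"
proof -
  let ?X = "dinv C ** dinv M ** M0 zt zb"
  have sq: "zt^2 < 1" "zb^2 < 1" unfolding abs_square_less_1 using zt zb by auto
  have X: "invertible ?X" using invertible_mult inv_dinv[OF C] inv_dinv[OF M] M0_inv[OF sq] by blast
  have pt: "\<And>u. ?X *v u = dinv C *v (dinv M *v (M0 zt zb *v u))" by (simp only: matrix_vector_mul_assoc matrix_mul_assoc)
  have ln: "proj (C *v (M *v u)) = proj (dinv ?X *v w)" if "transpose (M0 zt zb) *v u = c *\<^sub>R w" "c \<noteq> 0" for u w c
  proof -
    have h: "transpose ?X *v (C *v (M *v u)) = c *\<^sub>R w" by (simp only: XT[OF C M] that(1))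
    show ?thesis using linv2[OF X h that(2)] by (rule sym)
  qed
  have nz: "1 - zb \<noteq> 0" "1 + zb \<noteq> 0" "1 - zt \<noteq> 0" "1 + zt \<noteq> 0" "zb + 1 \<noteq> 0" "zt + 1 \<noteq> 0"
     "zt - 1 \<noteq> 0" "zb - 1 \<noteq> 0" "1 - zb * zb \<noteq> 0" "1 - zt * zt \<noteq> 0" "zt * zt - 1 \<noteq> 0"
    using zt zb sq by (auto simp: power2_eq_square)
  show ?thesis
  proof (rule obox_eq)
    show "bp (dual_act C (boxM M zt zb)) = bp (boxM ?X (-zb) zt)"
      unfolding dual_act_sel box_sel image_proj pt
      by (rule sym, rule proj_sc2[where c="1 - zb"]) (use nz in \<open>simp_all add: M0_mv vec3_eq_iff algebra_simps\<close>)
    show "bq (dual_act C (boxM M zt zb)) = bq (boxM ?X (-zb) zt)"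
      unfolding dual_act_sel box_sel image_proj pt
      by (rule sym, rule proj_sc2[where c="-(1 + zb)"]) (use nz in \<open>simp_all add: M0_mv vec3_eq_iff algebra_simps\<close>)
    show "br (dual_act C (boxM M zt zb)) = br (boxM ?X (-zb) zt)"
      unfolding dual_act_sel box_sel image_proj pt
      by (rule sym, rule proj_sc2[where c="1 - zt"]) (use nz in \<open>simp_all add: M0_mv vec3_eq_iff algebra_simps\<close>)
    show "bs (dual_act C (boxM M zt zb)) = bs (boxM ?X (-zb) zt)"
      unfolding dual_act_sel box_sel image_proj pt
      by (rule sym, rule proj_sc2[where c="-(1 + zt)"]) (use nz in \<open>simp_all add: M0_mv vec3_eq_iff algebra_simps\<close>)
    show "bt (dual_act C (boxM M zt zb)) = bt (boxM ?X (-zb) zt)"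
      unfolding dual_act_sel box_sel image_proj pt
      by (rule sym, rule proj_sc2[where c="1 - zb * zb"]) (use nz in \<open>simp_all add: M0_mv vec3_eq_iff algebra_simps\<close>)
    show "bb (dual_act C (boxM M zt zb)) = bb (boxM ?X (-zb) zt)"
      unfolding dual_act_sel box_sel image_proj pt
      by (rule sym, rule proj_sc2[where c="zt * zt - 1"]) (use nz in \<open>simp_all add: M0_mv vec3_eq_iff algebra_simps\<close>)
    show "bP (dual_act C (boxM M zt zb)) = bP (boxM ?X (-zb) zt)"
      unfolding dual_act_sel box_sel image_proj
      by (rule ln[where c="zt - 1"]) (use nz in \<open>simp_all del: transpose_matrix_vector add: M0_tmv vec3_eq_iff algebra_simps\<close>)
    show "bQ (dual_act C (boxM M zt zb)) = bQ (boxM ?X (-zb) zt)"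
      unfolding dual_act_sel box_sel image_proj
      by (rule ln[where c="1 + zt"]) (use nz in \<open>simp_all del: transpose_matrix_vector add: M0_tmv vec3_eq_iff algebra_simps\<close>)
    show "bR (dual_act C (boxM M zt zb)) = bR (boxM ?X (-zb) zt)"
      unfolding dual_act_sel box_sel image_proj
      by (rule ln[where c="1 - zb"]) (use nz in \<open>simp_all del: transpose_matrix_vector add: M0_tmv vec3_eq_iff algebra_simps\<close>)
    show "bS (dual_act C (boxM M zt zb)) = bS (boxM ?X (-zb) zt)"
      unfolding dual_act_sel box_sel image_proj
      by (rule ln[where c="-(1 + zb)"]) (use nz in \<open>simp_all del: transpose_matrix_vector add: M0_tmv vec3_eq_iff algebra_simps\<close>)
    show "bT (dual_act C (boxM M zt zb)) = bT (boxM ?X (-zb) zt)"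
      unfolding dual_act_sel box_sel image_proj
      by (rule ln[where c="zt * zt - 1"]) (use nz in \<open>simp_all del: transpose_matrix_vector add: M0_tmv vec3_eq_iff algebra_simps\<close>)
    show "bB (dual_act C (boxM M zt zb)) = bB (boxM ?X (-zb) zt)"
      unfolding dual_act_sel box_sel image_proj
      by (rule ln[where c="1 - zb * zb"]) (use nz in \<open>simp_all del: transpose_matrix_vector add: M0_tmv vec3_eq_iff algebra_simps\<close>)
  qed
qed


lemma cr_nz:
  assumes u: "u \<noteq> 0" and v: "v \<noteq> 0" and uv: "proj u \<noteq> proj v"
  shows "cr u v \<noteq> 0"
proof
  assume "cr u v = 0"
  then have "cr v u = 0" by (auto simp: cr_def zero3 algebra_simps)
  then obtain k where "v = k *\<^sub>R u" using cross_par u by blast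
  then show False using uv v proj_scale[of k u] by (cases "k = 0") auto
qed

lemma cr_orth: "cr u v \<bullet> u = 0" "cr u v \<bullet> v = 0" "u \<bullet> cr u v = 0" "v \<bullet> cr u v = 0"
  by (simp_all add: cr_def inner3 algebra_simps)

lemma join_cr:
  assumes u: "u \<noteq> 0" and v: "v \<noteq> 0" and uv: "proj u \<noteq> proj v"
  shows "join (proj u) (proj v) = proj (cr u v)"
  by (rule join_eq) (use assms cr_nz[OF assms] in \<open>auto simp: PP_I incid_proj cr_orth\<close>)

lemma meet_cr:
  assumes u: "u \<noteq> 0" and v: "v \<noteq> 0" and uv: "proj u \<noteq> proj v"
  shows "meet (proj u) (proj v) = proj (cr u v)"
  by (rule meet_eq) (use assms cr_nz[OF assms] in \<open>simp_all add: PP_I incid_proj cr_orth\<close>)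

definition mkM :: "vec \<Rightarrow> vec \<Rightarrow> vec \<Rightarrow> real^3^3" where
  "mkM a b c = (\<chi> i. vec3 (a$i) (b$i) (c$i))"

lemma mkM_mv: "mkM a b c *v v = v$1 *\<^sub>R a + v$2 *\<^sub>R b + v$3 *\<^sub>R c"
  by (simp add: mkM_def matrix_vector_mult_def vec3_eq_iff sum_3 algebra_simps)

lemma det_mkM: "det (mkM a b c) = cr a b \<bullet> c"
  by (simp add: det_3 mkM_def cr_def inner3 algebra_simps)

lemma cramer3:
  "(cr r s \<bullet> q) *\<^sub>R p - (cr r s \<bullet> p) *\<^sub>R q + (cr p q \<bullet> s) *\<^sub>R r - (cr p q \<bullet> r) *\<^sub>R s = 0"
  by (simp add: cr_def inner3 vec3_eq_iff algebra_simps)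

lemma trip_half:
  assumes "a + b + c + d = (0::vec)"
  shows "cr ((-1/2) *\<^sub>R (a + b)) ((1/2) *\<^sub>R (a - b)) \<bullet> ((1/2) *\<^sub>R (c - d)) = (1/2) * (cr a b \<bullet> c)"
proof -
  have d: "d = - (a + b + c)" using assms by (simp add: eq_neg_iff_add_eq_0 algebra_simps)
  show ?thesis unfolding d by (simp add: cr_def inner3 field_simps)
qed


lemma sep_inv:
  assumes M: "invertible (M::real^3^3)"
    and s: "separates (proj (M *v u)) (proj (M *v v)) c (proj (M *v w))"
  shows "\<exists>a b a' b' k. c = proj (M *v (a *\<^sub>R u + b *\<^sub>R v)) \<and> a' *\<^sub>R u + b' *\<^sub>R v = k *\<^sub>R w \<and> a * b * a' * b' < 0"
proof -
  obtain va vb vc vd al be al' be' where h: "va \<noteq> 0" "vb \<noteq> 0" "proj (M *v u) = proj va"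
    "proj (M *v v) = proj vb" "c = proj vc" "proj (M *v w) = proj vd" "vc = al *\<^sub>R va + be *\<^sub>R vb"
    "vd = al' *\<^sub>R va + be' *\<^sub>R vb" "al * be * al' * be' < 0"
    using s unfolding separates_def by blast
  obtain l1 where l: "va = l1 *\<^sub>R (M *v u)" using proj_eqD[OF h(3)] by blast
  obtain m1 where m: "vb = m1 *\<^sub>R (M *v v)" using proj_eqD[OF h(4)] by blast
  obtain k where k: "vd = k *\<^sub>R (M *v w)" using proj_eqD[OF h(6)] by blast
  have l0: "l1 \<noteq> 0" using h(1) l by auto
  have m0: "m1 \<noteq> 0" using h(2) m by auto
  have c: "c = proj (M *v ((al * l1) *\<^sub>R u + (be * m1) *\<^sub>R v))"
    using h(5,7) l m by (simp add: lin2)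
  have "M *v ((al' * l1) *\<^sub>R u + (be' * m1) *\<^sub>R v) = M *v (k *\<^sub>R w)"
    using h(8) k l m by (simp add: lin2 matrix_vector_mult_scaleR)
  then have e: "(al' * l1) *\<^sub>R u + (be' * m1) *\<^sub>R v = k *\<^sub>R w" by (metis mv_minv[OF M])
  have eqp: "(al * l1) * (be * m1) * (al' * l1) * (be' * m1) = (al * be * al' * be') * ((l1 * m1) * (l1 * m1))"
    by (simp add: algebra_simps)
  have "l1 * m1 \<noteq> 0" using l0 m0 by simp
  then have pos: "(l1 * m1) * (l1 * m1) > 0" using not_real_square_gt_zero by blast
  have "(al * be * al' * be') * ((l1 * m1) * (l1 * m1)) < 0" using h(9) pos by (rule mult_neg_pos)
  then have "(al * l1) * (be * m1) * (al' * l1) * (be' * m1) < 0" by (simp only: eqp)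
  then show ?thesis using c e by blast
qed

lemma ratio_lt:
  assumes "0 < (a::real) * b"
  shows "-1 < (b - a) / (a + b) \<and> (b - a) / (a + b) < 1"
proof (cases "0 < a")
  case True
  then have "0 < b" using assms by (metis mult_pos_neg not_less_iff_gr_or_eq mult_zero_right less_asym)
  then show ?thesis using True by (simp add: divide_simps)
next
  case False
  then have a: "a < 0" using assms by (cases "a = 0") auto
  then have "b < 0" using assms by (metis mult_neg_pos not_less_iff_gr_or_eq mult_zero_right less_asym)
  then show ?thesis using a by (simp add: divide_simps)
qed

lemma prod_pos:
  assumes "(a::real) * b * a' * b' < 0" "a' + b' = 0"
  shows "0 < a * b"
proof (rule ccontr)
  assume "\<not> 0 < a * b"
  then have ab: "a * b \<le> 0" by simp
  have h: "a' * b' = - (a' * a')" using assms(2) by (simp add: eq_neg_iff_add_eq_0[symmetric])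
  have "a * b * a' * b' = (a * b) * (a' * b')" by (simp only: mult.assoc)
  also have "\<dots> = - ((a * b) * (a' * a'))" using h by simp
  finally have e: "a * b * a' * b' = - ((a * b) * (a' * a'))" .
  have "(a * b) * (a' * a') \<le> 0" using ab by (simp add: mult_nonpos_nonneg)
  then show False using assms(1) e by simp
qed

lemma cr_scale: "cr (a *\<^sub>R x) (b *\<^sub>R y) \<bullet> (c *\<^sub>R z) = a * b * c * (cr x y \<bullet> z)"
  by (simp add: cr_def inner3 algebra_simps)


lemma convex_normal:
  assumes cv: "convex_box \<Theta>"
  shows "\<exists>M zt zb. invertible M \<and> -1 < zt \<and> zt < 1 \<and> -1 < zb \<and> zb < 1 \<and> \<Theta> = boxM M zt zb"
proof -
  have c0: "is_obox \<Theta> \<and> separates (bp \<Theta>) (bq \<Theta>) (bt \<Theta>) (meet (bT \<Theta>) (bB \<Theta>)) \<and>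
     separates (br \<Theta>) (bs \<Theta>) (bb \<Theta>) (meet (bT \<Theta>) (bB \<Theta>))"
    using cv unfolding convex_box_def .
  have ob: "is_obox \<Theta>" using c0 by (rule conjunct1)
  have sp: "separates (bp \<Theta>) (bq \<Theta>) (bt \<Theta>) (meet (bT \<Theta>) (bB \<Theta>))" using c0 by (elim conjE)
  have sr: "separates (br \<Theta>) (bs \<Theta>) (bb \<Theta>) (meet (bT \<Theta>) (bB \<Theta>))" using c0 by (elim conjE)
  note obd = ob[unfolded is_obox_def]
  have A1: "\<forall>x\<in>{bp \<Theta>, bq \<Theta>, br \<Theta>, bs \<Theta>, bt \<Theta>, bb \<Theta>}. x \<in> PP" using obd by (elim conjE)
  have A2: "\<forall>X\<in>{bP \<Theta>, bQ \<Theta>, bR \<Theta>, bS \<Theta>, bT \<Theta>, bB \<Theta>}. X \<in> PP" using obd by (elim conjE)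
  have PPp: "bp \<Theta> \<in> PP" "bq \<Theta> \<in> PP" "br \<Theta> \<in> PP" "bs \<Theta> \<in> PP" "bt \<Theta> \<in> PP" "bb \<Theta> \<in> PP"
    using A1 by simp_all
  have PPl: "bT \<Theta> \<in> PP" "bB \<Theta> \<in> PP" using A2 by simp_all
  have pq: "bp \<Theta> \<noteq> bq \<Theta>" using obd by (elim conjE)
  have rs: "br \<Theta> \<noteq> bs \<Theta>" using obd by (elim conjE)
  have TB: "bT \<Theta> \<noteq> bB \<Theta>" using obd by (elim conjE)
  have Tj: "bT \<Theta> = join (bp \<Theta>) (bq \<Theta>)" using obd by (elim conjE)
  have Bj: "bB \<Theta> = join (br \<Theta>) (bs \<Theta>)" using obd by (elim conjE)
  have mt: "meet (bT \<Theta>) (bB \<Theta>) \<notin> {bp \<Theta>, bq \<Theta>, br \<Theta>, bs \<Theta>, bt \<Theta>, bb \<Theta>}" using obd by (elim conjE)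
  have lj1: "bP \<Theta> = join (bt \<Theta>) (bs \<Theta>)" using obd by (elim conjE)
  have lj2: "bQ \<Theta> = join (bt \<Theta>) (br \<Theta>)" using obd by (elim conjE)
  have lj3: "bR \<Theta> = join (bb \<Theta>) (bq \<Theta>)" using obd by (elim conjE)
  have lj4: "bS \<Theta> = join (bb \<Theta>) (bp \<Theta>)" using obd by (elim conjE)
  note lj = lj1 lj2 lj3 lj4
  obtain vp where vp: "vp \<noteq> 0" "bp \<Theta> = proj vp" using PPp(1) by (rule PP_E)
  obtain vq where vq: "vq \<noteq> 0" "bq \<Theta> = proj vq" using PPp(2) by (rule PP_E)
  obtain vr where vr: "vr \<noteq> 0" "br \<Theta> = proj vr" using PPp(3) by (rule PP_E)
  obtain vs where vs: "vs \<noteq> 0" "bs \<Theta> = proj vs" using PPp(4) by (rule PP_E)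
  define nT where "nT = cr vp vq"
  define nB where "nB = cr vr vs"
  have T: "bT \<Theta> = proj nT" unfolding nT_def Tj vp(2) vq(2) by (rule join_cr) (use vp vq pq in auto)
  have B: "bB \<Theta> = proj nB" unfolding nB_def Bj vr(2) vs(2) by (rule join_cr) (use vr vs rs in auto)
  have nTr: "nT \<bullet> vr \<noteq> 0"
  proof
    assume h: "nT \<bullet> vr = 0"
    have i1: "incid (br \<Theta>) (bT \<Theta>)" using h unfolding T vr(2) incid_proj nT_def nB_def by (simp add: cr_orth)
    have i2: "incid (br \<Theta>) (bB \<Theta>)" using h unfolding B vr(2) incid_proj nT_def nB_def by (simp add: cr_orth)
    have "meet (bT \<Theta>) (bB \<Theta>) = br \<Theta>" by (rule meet_eq[OF PPl TB PPp(3) i1 i2])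
    then have "meet (bT \<Theta>) (bB \<Theta>) \<in> {bp \<Theta>, bq \<Theta>, br \<Theta>, bs \<Theta>, bt \<Theta>, bb \<Theta>}" by simp
    with mt show False by (rule notE)
  qed
  have nTs: "nT \<bullet> vs \<noteq> 0"
  proof
    assume h: "nT \<bullet> vs = 0"
    have i1: "incid (bs \<Theta>) (bT \<Theta>)" using h unfolding T vs(2) incid_proj nT_def nB_def by (simp add: cr_orth)
    have i2: "incid (bs \<Theta>) (bB \<Theta>)" using h unfolding B vs(2) incid_proj nT_def nB_def by (simp add: cr_orth)
    have "meet (bT \<Theta>) (bB \<Theta>) = bs \<Theta>" by (rule meet_eq[OF PPl TB PPp(4) i1 i2])
    then have "meet (bT \<Theta>) (bB \<Theta>) \<in> {bp \<Theta>, bq \<Theta>, br \<Theta>, bs \<Theta>, bt \<Theta>, bb \<Theta>}" by simp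
    with mt show False by (rule notE)
  qed
  have nBp: "nB \<bullet> vp \<noteq> 0"
  proof
    assume h: "nB \<bullet> vp = 0"
    have i1: "incid (bp \<Theta>) (bT \<Theta>)" using h unfolding T vp(2) incid_proj nT_def nB_def by (simp add: cr_orth)
    have i2: "incid (bp \<Theta>) (bB \<Theta>)" using h unfolding B vp(2) incid_proj nT_def nB_def by (simp add: cr_orth)
    have "meet (bT \<Theta>) (bB \<Theta>) = bp \<Theta>" by (rule meet_eq[OF PPl TB PPp(1) i1 i2])
    then have "meet (bT \<Theta>) (bB \<Theta>) \<in> {bp \<Theta>, bq \<Theta>, br \<Theta>, bs \<Theta>, bt \<Theta>, bb \<Theta>}" by simp
    with mt show False by (rule notE)
  qed
  have nBq: "nB \<bullet> vq \<noteq> 0"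
  proof
    assume h: "nB \<bullet> vq = 0"
    have i1: "incid (bq \<Theta>) (bT \<Theta>)" using h unfolding T vq(2) incid_proj nT_def nB_def by (simp add: cr_orth)
    have i2: "incid (bq \<Theta>) (bB \<Theta>)" using h unfolding B vq(2) incid_proj nT_def nB_def by (simp add: cr_orth)
    have "meet (bT \<Theta>) (bB \<Theta>) = bq \<Theta>" by (rule meet_eq[OF PPl TB PPp(2) i1 i2])
    then have "meet (bT \<Theta>) (bB \<Theta>) \<in> {bp \<Theta>, bq \<Theta>, br \<Theta>, bs \<Theta>, bt \<Theta>, bb \<Theta>}" by simp
    with mt show False by (rule notE)
  qed
  define p' where "p' = (nB \<bullet> vq) *\<^sub>R vp"
  define q' where "q' = (- (nB \<bullet> vp)) *\<^sub>R vq"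
  define r' where "r' = (nT \<bullet> vs) *\<^sub>R vr"
  define s' where "s' = (- (nT \<bullet> vr)) *\<^sub>R vs"
  have sum: "p' + q' + r' + s' = 0"
    unfolding p'_def q'_def r'_def s'_def nT_def nB_def by (simp add: cr_def inner3 vec3_eq_iff algebra_simps)
  then have sc: "s'$1 = - (p'$1 + q'$1 + r'$1)" "s'$2 = - (p'$2 + q'$2 + r'$2)" "s'$3 = - (p'$3 + q'$3 + r'$3)"
    by (auto simp: vec3_eq_iff algebra_simps eq_neg_iff_add_eq_0)
  define e1 where "e1 = (-1/2) *\<^sub>R (p' + q')"
  define e2 where "e2 = (1/2) *\<^sub>R (p' - q')"
  define e3 where "e3 = (1/2) *\<^sub>R (r' - s')"
  define M where "M = mkM e1 e2 e3"
  have "det M = (1/2) * (cr p' q' \<bullet> r')" unfolding M_def det_mkM e1_def e2_def e3_def by (rule trip_half[OF sum])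
  also have "\<dots> = (1/2) * ((nB \<bullet> vq) * (- (nB \<bullet> vp)) * (nT \<bullet> vs) * (nT \<bullet> vr))"
    unfolding p'_def q'_def r'_def cr_scale nT_def by simp
  finally have "det M \<noteq> 0" using nTr nTs nBp nBq by simp
  then have Minv: "invertible M" by (simp add: invertible_det_nz)
  have Mp: "M *v vec3 (-1) 1 0 = p'" unfolding M_def mkM_mv e1_def e2_def e3_def by (simp add: vec3_eq_iff algebra_simps)
  have Mq: "M *v vec3 1 1 0 = - q'" unfolding M_def mkM_mv e1_def e2_def e3_def by (simp add: vec3_eq_iff algebra_simps)
  have Mr: "M *v vec3 1 0 1 = r'" unfolding M_def mkM_mv e1_def e2_def e3_def using sc by (simp add: vec3_eq_iff algebra_simps)
  have Ms: "M *v vec3 (-1) 0 1 = - s'" unfolding M_def mkM_mv e1_def e2_def e3_def using sc by (simp add: vec3_eq_iff algebra_simps)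
  have Me: "M *v vec3 1 0 0 = (-1/2) *\<^sub>R (p' + q')" unfolding M_def mkM_mv e1_def by simp
  have Me2: "M *v vec3 1 0 0 = (1/2) *\<^sub>R (r' + s')" unfolding Me using sc by (simp add: vec3_eq_iff algebra_simps)
  have Pp: "bp \<Theta> = proj (M *v vec3 (-1) 1 0)" unfolding Mp p'_def vp(2) using proj_scale nBq by simp
  have Pq: "bq \<Theta> = proj (M *v vec3 1 1 0)" unfolding Mq q'_def vq(2) using proj_scale nBp by simp
  have Pr: "br \<Theta> = proj (M *v vec3 1 0 1)" unfolding Mr r'_def vr(2) using proj_scale nTs by simp
  have Ps: "bs \<Theta> = proj (M *v vec3 (-1) 0 1)" unfolding Ms s'_def vs(2) using proj_scale nTr by simp
  have Pm: "meet (bT \<Theta>) (bB \<Theta>) = proj (M *v vec3 1 0 0)"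
  proof (rule meet_eq[OF PPl TB])
    show "proj (M *v vec3 1 0 0) \<in> PP" using PP_M[OF Minv] by (simp add: zero3)
    show "incid (proj (M *v vec3 1 0 0)) (bT \<Theta>)" unfolding T Me incid_proj p'_def q'_def nT_def
      by (simp add: inner_add_right inner_diff_right cr_orth)
    show "incid (proj (M *v vec3 1 0 0)) (bB \<Theta>)" unfolding B Me2 incid_proj r'_def s'_def nB_def
      by (simp add: inner_add_right inner_diff_right cr_orth)
  qed
  obtain a b a' b' k where ht: "bt \<Theta> = proj (M *v (a *\<^sub>R vec3 (-1) 1 0 + b *\<^sub>R vec3 1 1 0))"
    "a' *\<^sub>R vec3 (-1) 1 0 + b' *\<^sub>R vec3 1 1 0 = k *\<^sub>R vec3 1 0 0" "a * b * a' * b' < 0"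
    using sep_inv[OF Minv, of "vec3 (-1) 1 0" "vec3 1 1 0" "bt \<Theta>" "vec3 1 0 0"] sp unfolding Pp Pq Pm by blast
  have "a' + b' = 0" using ht(2) by (simp add: vec3_eq_iff)
  then have abp: "0 < a * b" using prod_pos ht(3) by blast
  have abn: "a + b \<noteq> 0"
  proof
    assume "a + b = 0"
    then have "b = - a" by simp
    then show False using abp by simp
  qed
  define zt where "zt = (b - a) / (a + b)"
  have zt: "-1 < zt" "zt < 1" unfolding zt_def using ratio_lt[OF abp] by auto
  have Pt: "bt \<Theta> = proj (M *v vec3 zt 1 0)" unfolding ht(1)
    by (rule proj_sc1[where c="a + b"]) (use abn in \<open>simp_all add: zt_def vec3_eq_iff field_simps\<close>)
  obtain c d c' d' k' where hb: "bb \<Theta> = proj (M *v (c *\<^sub>R vec3 1 0 1 + d *\<^sub>R vec3 (-1) 0 1))"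
    "c' *\<^sub>R vec3 1 0 1 + d' *\<^sub>R vec3 (-1) 0 1 = k' *\<^sub>R vec3 1 0 0" "c * d * c' * d' < 0"
    using sep_inv[OF Minv, of "vec3 1 0 1" "vec3 (-1) 0 1" "bb \<Theta>" "vec3 1 0 0"] sr unfolding Pr Ps Pm by blast
  have "c' + d' = 0" using hb(2) by (simp add: vec3_eq_iff)
  then have cdp: "0 < c * d" using prod_pos hb(3) by blast
  have cdn: "c + d \<noteq> 0"
  proof
    assume "c + d = 0"
    then have "d = - c" by simp
    then show False using cdp by simp
  qed
  define zb where "zb = (c - d) / (d + c)"
  have zb: "-1 < zb" "zb < 1" unfolding zb_def using ratio_lt[of d c] cdp by (auto simp: mult.commute)
  have Pb: "bb \<Theta> = proj (M *v vec3 zb 0 1)" unfolding hb(1)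
    by (rule proj_sc1[where c="c + d"]) (use cdn in \<open>simp_all add: zb_def vec3_eq_iff field_simps\<close>)
  have obB: "is_obox (boxM M zt zb)" using is_obox_box[OF Minv] zt zb by auto
  note obBd = obB[unfolded is_obox_def]
  have pts: "bp \<Theta> = bp (boxM M zt zb)" "bq \<Theta> = bq (boxM M zt zb)" "br \<Theta> = br (boxM M zt zb)"
    "bs \<Theta> = bs (boxM M zt zb)" "bt \<Theta> = bt (boxM M zt zb)" "bb \<Theta> = bb (boxM M zt zb)"
    using Pp Pq Pr Ps Pt Pb by simp_all
  have "\<Theta> = boxM M zt zb"
  proof (rule obox_eq)
    show "bp \<Theta> = bp (boxM M zt zb)" "bq \<Theta> = bq (boxM M zt zb)" "br \<Theta> = br (boxM M zt zb)"
      "bs \<Theta> = bs (boxM M zt zb)" "bt \<Theta> = bt (boxM M zt zb)" "bb \<Theta> = bb (boxM M zt zb)" by (fact pts)+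
    show "bP \<Theta> = bP (boxM M zt zb)"
    proof -
      have "bP (boxM M zt zb) = join (bt (boxM M zt zb)) (bs (boxM M zt zb))" using obBd by (elim conjE)
      then show ?thesis using lj(1) pts by simp
    qed
    show "bQ \<Theta> = bQ (boxM M zt zb)"
    proof -
      have "bQ (boxM M zt zb) = join (bt (boxM M zt zb)) (br (boxM M zt zb))" using obBd by (elim conjE)
      then show ?thesis using lj(2) pts by simp
    qed
    show "bR \<Theta> = bR (boxM M zt zb)"
    proof -
      have "bR (boxM M zt zb) = join (bb (boxM M zt zb)) (bq (boxM M zt zb))" using obBd by (elim conjE)
      then show ?thesis using lj(3) pts by simp
    qed
    show "bS \<Theta> = bS (boxM M zt zb)"
    proof -
      have "bS (boxM M zt zb) = join (bb (boxM M zt zb)) (bp (boxM M zt zb))" using obBd by (elim conjE)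
      then show ?thesis using lj(4) pts by simp
    qed
    show "bT \<Theta> = bT (boxM M zt zb)"
    proof -
      have "bT (boxM M zt zb) = join (bp (boxM M zt zb)) (bq (boxM M zt zb))" using obBd by (elim conjE)
      then show ?thesis using Tj pts by simp
    qed
    show "bB \<Theta> = bB (boxM M zt zb)"
    proof -
      have "bB (boxM M zt zb) = join (br (boxM M zt zb)) (bs (boxM M zt zb))" using obBd by (elim conjE)
      then show ?thesis using Bj pts by simp
    qed
  qed
  then show ?thesis using Minv zt zb by blast
qed


lemma rot_pow:
  "(rot ^^ 0) z = z" "(rot ^^ 1) z = (- snd z, fst z)" "(rot ^^ 2) z = (- fst z, - snd z)"
  "(rot ^^ 3) z = (snd z, - fst z)" "rot ^^ 4 = id"
  by (auto simp: rot_def eval_nat_numeral fun_eq_iff)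

lemma rot_mod: "(rot ^^ k) z = (rot ^^ (k mod 4)) z"
proof -
  have "k = k mod 4 + 4 * (k div 4)" by simp
  then have "(rot ^^ k) = (rot ^^ (k mod 4)) \<circ> ((rot ^^ 4) ^^ (k div 4))"
    by (metis funpow_add funpow_mult mult.commute)
  then show ?thesis by (simp add: rot_pow(5))
qed

lemma mod4_cases: "(k::nat) mod 4 = 0 \<or> k mod 4 = 1 \<or> k mod 4 = 2 \<or> k mod 4 = 3"
  by arith

lemma GE_proj:
  assumes M: "invertible (M::real^3^3)" and M': "invertible (M'::real^3^3)"
  shows "G_equiv (boxM M zt zb) (boxM M' zt zb)"
proof -
  let ?A = "M' ** matrix_inv M"
  have A: "invertible ?A" using invertible_mult[OF M' inv_minv[OF M]] .
  have "?A ** M = M'" by (simp add: matrix_mul_assoc[symmetric] minv_props(2)[OF M])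
  then have "proj_act ?A (boxM M zt zb) = boxM M' zt zb" using proj_act_box[OF A M] by simp
  then show ?thesis unfolding G_equiv_def using A by metis
qed

lemma GE_dual:
  assumes M: "invertible (M::real^3^3)" and M': "invertible (M'::real^3^3)"
    and zt: "-1 < zt" "zt < 1" and zb: "-1 < zb" "zb < 1"
  shows "G_equiv (boxM M zt zb) (boxM M' (-zb) zt)"
proof -
  have sq: "zt^2 < 1" "zb^2 < 1" unfolding abs_square_less_1 using zt zb by auto
  note M0i = M0_inv[OF sq]
  let ?Y = "M' ** matrix_inv (M0 zt zb) ** transpose M"
  have Y: "invertible ?Y" using invertible_mult[OF invertible_mult[OF M' inv_minv[OF M0i]] transpose_invertible[OF M]] .
  let ?C = "transpose (matrix_inv ?Y)"
  have C: "invertible ?C" using transpose_invertible[OF inv_minv[OF Y]] .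
  have dC: "dinv ?C = ?Y" by (simp add: minv_minv[OF Y])
  have tM: "transpose M ** dinv M = mat 1" using minv_props(1)[OF transpose_invertible[OF M]] .
  have "dinv ?C ** dinv M ** M0 zt zb = M' ** matrix_inv (M0 zt zb) ** (transpose M ** dinv M) ** M0 zt zb"
    unfolding dC by (simp add: matrix_mul_assoc)
  also have "\<dots> = M' ** (matrix_inv (M0 zt zb) ** M0 zt zb)" unfolding tM by (simp add: matrix_mul_assoc)
  also have "\<dots> = M'" using minv_props(2)[OF M0i] by simp
  finally have e: "dinv ?C ** dinv M ** M0 zt zb = M'" .
  have "dual_act ?C (boxM M zt zb) = boxM M' (-zb) zt" using dual_box[OF C M zt zb] e by simp
  then show ?thesis unfolding G_equiv_def using C by metis
qed

lemma GE_inv: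
  assumes M: "invertible (M::real^3^3)" and zt: "-1 < zt" "zt < 1" and zb: "-1 < zb" "zb < 1"
    and G: "G_equiv (boxM M zt zb) X"
  shows "\<exists>K. invertible K \<and> (X = boxM K zt zb \<or> X = boxM K (-zb) zt)"
proof -
  obtain A where A: "invertible A" and X: "X = proj_act A (boxM M zt zb) \<or> X = dual_act A (boxM M zt zb)"
    using G unfolding G_equiv_def by blast
  have sq: "zt^2 < 1" "zb^2 < 1" unfolding abs_square_less_1 using zt zb by auto
  from X show ?thesis
  proof
    assume "X = proj_act A (boxM M zt zb)"
    then have "X = boxM (A ** M) zt zb" using proj_act_box[OF A M] by simp
    then show ?thesis using invertible_mult[OF A M] by blast
  next
    assume "X = dual_act A (boxM M zt zb)"
    then have "X = boxM (dinv A ** dinv M ** M0 zt zb) (-zb) zt" using dual_box[OF A M zt zb] by simp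
    moreover have "invertible (dinv A ** dinv M ** M0 zt zb)"
      using invertible_mult[OF invertible_mult[OF inv_dinv[OF A] inv_dinv[OF M]] M0_inv[OF sq]] .
    ultimately show ?thesis by blast
  qed
qed

lemma inv_id: "invertible (mat 1 :: real^3^3)"
  unfolding invertible_def by (rule exI[of _ "mat 1"]) simp

theorem corollary4p7:
  shows "(\<forall>\<Theta>. convex_box \<Theta> \<longrightarrow> params \<Theta> \<in> {-1<..<1} \<times> {-1<..<1})
    \<and> (\<forall>\<Theta>. convex_box \<Theta> \<longrightarrow> convex_box (jflip \<Theta>) \<and>
          (\<forall>A. invertible A \<longrightarrow> convex_box (proj_act A \<Theta>) \<and> convex_box (dual_act A \<Theta>)))
    \<and> (\<forall>\<Theta> \<Theta>'. convex_box \<Theta> \<longrightarrow> convex_box \<Theta>' \<longrightarrow>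
          (marked_equiv \<Theta> \<Theta>' \<longleftrightarrow> (\<exists>k::nat. params \<Theta>' = (rot ^^ k) (params \<Theta>))))
    \<and> (\<forall>z \<in> {-1<..<1} \<times> {-1<..<1}. \<exists>\<Theta>. convex_box \<Theta> \<and> params \<Theta> = z)"
proof (intro conjI allI impI ballI)
  fix \<Theta> assume cv: "convex_box \<Theta>"
  then obtain M zt zb where M: "invertible M" and z: "-1 < zt" "zt < 1" "-1 < zb" "zb < 1"
    and T: "\<Theta> = boxM M zt zb" using convex_normal by blast
  show "params \<Theta> \<in> {-1<..<1} \<times> {-1<..<1}" using T params_box[OF M] z by simp
next
  fix \<Theta> assume cv: "convex_box \<Theta>"
  then obtain M zt zb where M: "invertible M" and z: "-1 < zt" "zt < 1" "-1 < zb" "zb < 1"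
    and T: "\<Theta> = boxM M zt zb" using convex_normal by blast
  show "convex_box (jflip \<Theta>)" unfolding T jflip_box[OF M]
    by (rule convex_box_M[OF invertible_mult[OF M Nm_inv]]) (use z in auto)
  fix A :: "real^3^3" assume A: "invertible A"
  show "convex_box (proj_act A \<Theta>)" unfolding T proj_act_box[OF A M]
    by (rule convex_box_M[OF invertible_mult[OF A M]]) (use z in auto)
  have sq: "zt^2 < 1" "zb^2 < 1" unfolding abs_square_less_1 using z by auto
  show "convex_box (dual_act A \<Theta>)" unfolding T dual_box[OF A M z]
    by (rule convex_box_M[OF invertible_mult[OF invertible_mult[OF inv_dinv[OF A] inv_dinv[OF M]] M0_inv[OF sq]]])
       (use z in auto)
next
  fix \<Theta> \<Theta>' assume cv: "convex_box \<Theta>" and cv': "convex_box \<Theta>'"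
  obtain M zt zb where M: "invertible M" and z: "-1 < zt" "zt < 1" "-1 < zb" "zb < 1"
    and T: "\<Theta> = boxM M zt zb" using convex_normal[OF cv] by blast
  obtain M' wt wb where M': "invertible M'" and w: "-1 < wt" "wt < 1" "-1 < wb" "wb < 1"
    and T': "\<Theta>' = boxM M' wt wb" using convex_normal[OF cv'] by blast
  have pT: "params \<Theta> = (zt, zb)" using T params_box[OF M] by simp
  show "marked_equiv \<Theta> \<Theta>' \<longleftrightarrow> (\<exists>k::nat. params \<Theta>' = (rot ^^ k) (params \<Theta>))"
  proof
    assume "marked_equiv \<Theta> \<Theta>'"
    then consider "G_equiv \<Theta> \<Theta>'" | "G_equiv \<Theta> (jflip \<Theta>')" unfolding marked_equiv_def by blast
    then show "\<exists>k::nat. params \<Theta>' = (rot ^^ k) (params \<Theta>)"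
    proof cases
      case 1
      then obtain K where K: "invertible K" and X: "\<Theta>' = boxM K zt zb \<or> \<Theta>' = boxM K (-zb) zt"
        using GE_inv[OF M z] T by blast
      from X show ?thesis
      proof
        assume "\<Theta>' = boxM K zt zb"
        then have "params \<Theta>' = (rot ^^ 0) (params \<Theta>)" using params_box[OF K] pT by simp
        then show ?thesis by blast
      next
        assume "\<Theta>' = boxM K (-zb) zt"
        then have "params \<Theta>' = (rot ^^ 1) (params \<Theta>)" using params_box[OF K] pT rot_pow(2) by simp
        then show ?thesis by blast
      qed
    next
      case 2
      then obtain K where K: "invertible K" and X: "jflip \<Theta>' = boxM K zt zb \<or> jflip \<Theta>' = boxM K (-zb) zt"
        using GE_inv[OF M z] T by blast
      have KN: "invertible (K ** Nm)" using invertible_mult[OF K Nm_inv] .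
      from X show ?thesis
      proof
        assume "jflip \<Theta>' = boxM K zt zb"
        then have "\<Theta>' = boxM (K ** Nm) (-zt) (-zb)" using jflip_jflip[of \<Theta>'] jflip_box[OF K] by metis
        then have "params \<Theta>' = (rot ^^ 2) (params \<Theta>)" using params_box[OF KN] pT rot_pow(3) by simp
        then show ?thesis by blast
      next
        assume "jflip \<Theta>' = boxM K (-zb) zt"
        then have "\<Theta>' = boxM (K ** Nm) (- (-zb)) (-zt)" using jflip_jflip[of \<Theta>'] jflip_box[OF K] by metis
        then have "params \<Theta>' = (rot ^^ 3) (params \<Theta>)" using params_box[OF KN] pT rot_pow(4) by simp
        then show ?thesis by blast
      qed
    qed
  next
    assume "\<exists>k::nat. params \<Theta>' = (rot ^^ k) (params \<Theta>)"
    then obtain k where k: "params \<Theta>' = (rot ^^ (k mod 4)) (params \<Theta>)" using rot_mod by metis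
    have pT': "params \<Theta>' = (wt, wb)" using T' params_box[OF M'] by simp
    have M'N: "invertible (M' ** Nm)" using invertible_mult[OF M' Nm_inv] .
    have jT': "jflip \<Theta>' = boxM (M' ** Nm) (-wt) (-wb)" using T' jflip_box[OF M'] by simp
    from mod4_cases[of k] show "marked_equiv \<Theta> \<Theta>'"
    proof (elim disjE)
      assume "k mod 4 = 0"
      then have "wt = zt" "wb = zb" using k pT pT' rot_pow(1) by simp_all
      then have "G_equiv \<Theta> \<Theta>'" using GE_proj[OF M M'] T T' by simp
      then show ?thesis unfolding marked_equiv_def by blast
    next
      assume "k mod 4 = 1"
      then have "wt = -zb" "wb = zt" using k pT pT' rot_pow(2) by simp_all
      then have "G_equiv \<Theta> \<Theta>'" using GE_dual[OF M M' z] T T' by simp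
      then show ?thesis unfolding marked_equiv_def by blast
    next
      assume "k mod 4 = 2"
      then have "-wt = zt" "-wb = zb" using k pT pT' rot_pow(3) by simp_all
      then have "G_equiv \<Theta> (jflip \<Theta>')" using GE_proj[OF M M'N] T jT' by simp
      then show ?thesis unfolding marked_equiv_def by blast
    next
      assume "k mod 4 = 3"
      then have "-wt = -zb" "-wb = zt" using k pT pT' rot_pow(4) by simp_all
      then have "G_equiv \<Theta> (jflip \<Theta>')" using GE_dual[OF M M'N z] T jT' by simp
      then show ?thesis unfolding marked_equiv_def by blast
    qed
  qed
next
  fix z :: "real \<times> real" assume z: "z \<in> {-1<..<1} \<times> {-1<..<1}"
  have "convex_box (boxM (mat 1) (fst z) (snd z))" using convex_box_M[OF inv_id] z by (auto simp: mem_Times_iff)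
  moreover have "params (boxM (mat 1) (fst z) (snd z)) = z" using params_box[OF inv_id] by simp
  ultimately show "\<exists>\<Theta>. convex_box \<Theta> \<and> params \<Theta> = z" by blast
qed

end
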